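(* Let $H$ be a complex Hilbert space, let $K \in \mathcal{L}(H)$ be a positive compact operator, and let $\eta$ be a positive real number with $\eta > \|K\|/2$. Then the operator $W := \eta I - K$ satisfies the property $\mathcal{AN}^*$.
   Context: $\mathcal{L}(H)$ is the space of bounded linear operators on $H$; positive means $\langle Kx,x\rangle \ge 0$ for all $x\in H$. For a closed subspace $M \neq \{0\}$ of $H$ and $T \in \mathcal{L}(H)$, write $[T|_M] := \inf\{\|Tx\| : x \in M, \|x\|=1\}$; $T|_M$ satisfies $\mathcal{N}^*$ if there is $x_0 \in M$ with $\|x_0\|=1$ and $\|Tx_0\| = [T|_M]$. $T$ satisfies the property $\mathcal{AN}^*$ if $T|_M$ satisfies $\mathcal{N}^*$ for every closed subspace $M \neq \{0\}$ of $H$. *)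

theory Defs
  imports "HOL-Analysis.Analysis"
begin

text \<open>The distribution has no complex vector spaces, so we
  introduce a class: a real Banach space together with a complex scalar multiplication
  extending the real one and a complex inner product (linear in the first argument,
  conjugate symmetric) that induces the norm.\<close>

class chilbert = banach +
  fixes scaleC :: "complex \<Rightarrow> 'a \<Rightarrow> 'a"
    and cinner :: "'a \<Rightarrow> 'a \<Rightarrow> complex"
  assumes scaleC_of_real: "scaleC (complex_of_real r) x = r *\<^sub>R x"
    and scaleC_add_left: "scaleC (a + b) x = scaleC a x + scaleC b x"
    and scaleC_add_right: "scaleC a (x + y) = scaleC a x + scaleC a y"
    and scaleC_scaleC: "scaleC a (scaleC b x) = scaleC (a * b) x"
    and cinner_add_left: "cinner (x + y) z = cinner x z + cinner y z"
    and cinner_scaleC_left: "cinner (scaleC c x) y = c * cinner x y"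
    and cinner_commute: "cinner x y = cnj (cinner y x)"
    and cinner_self_norm: "cinner x x = complex_of_real ((norm x)\<^sup>2)"

definition bounded_clinear_op :: "('a::chilbert \<Rightarrow> 'a) \<Rightarrow> bool" where
  "bounded_clinear_op T \<longleftrightarrow>
     (\<forall>x y. T (x + y) = T x + T y) \<and> (\<forall>c x. T (scaleC c x) = scaleC c (T x)) \<and>
     (\<exists>B. \<forall>x. norm (T x) \<le> B * norm x)"

definition positive_op :: "('a::chilbert \<Rightarrow> 'a) \<Rightarrow> bool" where
  "positive_op K \<longleftrightarrow> (\<forall>x. Im (cinner (K x) x) = 0 \<and> Re (cinner (K x) x) \<ge> 0)"

definition compact_op :: "('a::chilbert \<Rightarrow> 'a) \<Rightarrow> bool" where
  "compact_op K \<longleftrightarrow> compact (closure (K ` {x. norm x \<le> 1}))"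

definition closed_csubspace :: "'a::chilbert set \<Rightarrow> bool" where
  "closed_csubspace M \<longleftrightarrow> 0 \<in> M \<and> (\<forall>x\<in>M. \<forall>y\<in>M. x + y \<in> M) \<and>
     (\<forall>c. \<forall>x\<in>M. scaleC c x \<in> M) \<and> closed M"

definition restr_inf :: "('a::chilbert \<Rightarrow> 'a) \<Rightarrow> 'a set \<Rightarrow> real" where
  "restr_inf T M = Inf ((\<lambda>x. norm (T x)) ` {x \<in> M. norm x = 1})"

definition N_star :: "('a::chilbert \<Rightarrow> 'a) \<Rightarrow> 'a set \<Rightarrow> bool" where
  "N_star T M \<longleftrightarrow> (\<exists>x0\<in>M. norm x0 = 1 \<and> norm (T x0) = restr_inf T M)"

definition AN_star :: "('a::chilbert \<Rightarrow> 'a) \<Rightarrow> bool" where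
  "AN_star T \<longleftrightarrow> (\<forall>M. closed_csubspace M \<and> M \<noteq> {0} \<longrightarrow> N_star T M)"

end

theory Submission
  imports Defs
begin

definition ri :: "'a::chilbert \<Rightarrow> 'a \<Rightarrow> real" where
  "ri x y = Re (cinner x y)"

lemma ri_add_left: "ri (x + y) z = ri x z + ri y z"
  by (simp add: ri_def cinner_add_left)

lemma ri_commute: "ri x y = ri y x"
  unfolding ri_def by (subst cinner_commute) simp

lemma ri_add_right: "ri z (x + y) = ri z x + ri z y"
  by (metis ri_commute ri_add_left)

lemma ri_scaleR_left: "ri (r *\<^sub>R x) y = r * ri x y"
proof -
  have "r *\<^sub>R x = scaleC (complex_of_real r) x" by (simp add: scaleC_of_real)
  then show ?thesis by (simp add: ri_def cinner_scaleC_left)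
qed

lemma ri_scaleR_right: "ri y (r *\<^sub>R x) = r * ri y x"
  by (metis ri_commute ri_scaleR_left)

lemma ri_self: "ri x x = (norm x)\<^sup>2"
  by (simp add: ri_def cinner_self_norm)

lemma ri_minus_left: "ri (- x) y = - ri x y"
  by (metis ri_scaleR_left scaleR_minus1_left mult_minus1)

lemma ri_diff_left: "ri (x - y) z = ri x z - ri y z"
  by (simp add: ri_add_left ri_minus_left diff_conv_add_uminus del: add_uminus_conv_diff)

lemma ri_diff_right: "ri z (x - y) = ri z x - ri z y"
  by (metis ri_commute ri_diff_left)

lemma ri_expand2: "ri (a + t *\<^sub>R b) (c + t *\<^sub>R d) = ri a c + t * (ri a d + ri b c) + t^2 * ri b d"
  by (simp add: ri_add_left ri_add_right ri_scaleR_left ri_scaleR_right power2_eq_square algebra_simps)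

lemma quad_disc:
  fixes a b c :: real
  assumes "\<And>t. 0 \<le> a + t * (2*b) + t^2 * c"
  shows "b^2 \<le> a*c"
proof (cases "c = 0")
  case True
  show ?thesis
  proof (cases "b = 0")
    case False
    have "0 \<le> a + (-(a+1)/(2*b)) * (2*b) + (-(a+1)/(2*b))^2 * c" by (rule assms)
    with True False show ?thesis by (simp add: field_simps)
  qed (use assms[of 0] True in simp)
next
  case False
  have c0: "c \<ge> 0"
  proof (rule ccontr)
    assume "\<not> c \<ge> 0"
    hence cn: "c < 0" by simp
    define t where "t = sqrt ((\<bar>a\<bar> + 1) / (-c))"
    have "(\<bar>a\<bar> + 1) / (-c) \<ge> 0" using cn by (intro divide_nonneg_pos) auto
    hence "t^2 = (\<bar>a\<bar> + 1) / (-c)" unfolding t_def by simp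
    hence "t^2 * c = -(\<bar>a\<bar> + 1)" using cn by (simp add: field_simps)
    moreover have "0 \<le> a + t * (2*b) + t^2 * c" "0 \<le> a + (-t) * (2*b) + (-t)^2 * c" by (rule assms)+
    ultimately show False by simp
  qed
  with False have cp: "c > 0" by simp
  have "0 \<le> a + (-b/c) * (2*b) + (-b/c)^2 * c" by (rule assms)
  hence "0 \<le> a - b^2/c" using cp by (simp add: power2_eq_square field_simps)
  thus ?thesis using cp by (simp add: field_simps)
qed

lemma ri_cs: "\<bar>ri x y\<bar> \<le> norm x * norm y"
proof -
  have "(ri x y)^2 \<le> ri x x * ri y y"
  proof (rule quad_disc)
    fix t
    have "0 \<le> ri (x + t *\<^sub>R y) (x + t *\<^sub>R y)" by (simp add: ri_self)
    also have "\<dots> = ri x x + t * (2 * ri x y) + t^2 * ri y y"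
      by (simp add: ri_expand2 ri_commute[of y x])
    finally show "0 \<le> ri x x + t * (2 * ri x y) + t^2 * ri y y" .
  qed
  hence "(ri x y)^2 \<le> (norm x * norm y)^2" by (simp add: ri_self power_mult_distrib)
  hence "\<bar>ri x y\<bar> \<le> \<bar>norm x * norm y\<bar>" by (simp only: abs_le_square_iff)
  thus ?thesis by simp
qed

lemma cinner_add_right: "cinner z (x + y) = cinner z x + cinner z y"
  by (subst (1 2 3) cinner_commute) (simp add: cinner_add_left)

lemma cinner_scaleC_right: "cinner y (scaleC c x) = cnj c * cinner y x"
  by (subst (1 2) cinner_commute) (simp add: cinner_scaleC_left)

lemma scaleR_scaleC: "r *\<^sub>R x = scaleC (complex_of_real r) x"
  by (simp add: scaleC_of_real)

lemma bco_add: "bounded_clinear_op K \<Longrightarrow> K (x + y) = K x + K y"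
  by (simp add: bounded_clinear_op_def)

lemma bco_scaleC: "bounded_clinear_op K \<Longrightarrow> K (scaleC c x) = scaleC c (K x)"
  by (simp add: bounded_clinear_op_def)

lemma bco_scaleR: "bounded_clinear_op K \<Longrightarrow> K (r *\<^sub>R x) = r *\<^sub>R K x"
  by (simp add: scaleR_scaleC bco_scaleC)

lemma bco_bounded_linear:
  assumes "bounded_clinear_op K" shows "bounded_linear K"
proof -
  obtain B where B: "\<And>x. norm (K x) \<le> B * norm x" using assms unfolding bounded_clinear_op_def by blast
  show ?thesis
  proof (rule bounded_linear_intro[where K=B])
    show "K (x + y) = K x + K y" for x y by (rule bco_add[OF assms])
    show "K (r *\<^sub>R x) = r *\<^sub>R K x" for r x by (rule bco_scaleR[OF assms])
    show "norm (K x) \<le> norm x * B" for x using B[of x] by (simp add: mult.commute)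
  qed
qed

lemma bco_selfadj:
  assumes K: "bounded_clinear_op K" and P: "positive_op K"
  shows "ri (K u) v = ri (K v) u"
proof -
  have im0: "Im (cinner (K x) x) = 0" for x using P by (simp add: positive_op_def)
  have exp: "Im (cinner (K u) w + cinner (K w) u) = 0" for w
  proof -
    have "cinner (K (u + w)) (u + w) = cinner (K u) u + cinner (K w) w + (cinner (K u) w + cinner (K w) u)"
      by (simp add: bco_add[OF K] cinner_add_left cinner_add_right)
    from arg_cong[where f=Im, OF this] show ?thesis using im0[of "u+w"] im0[of u] im0[of w] by simp
  qed
  have "Im (cinner (K u) (scaleC \<i> v) + cinner (K (scaleC \<i> v)) u) = 0" by (rule exp)
  hence "Im (- \<i> * cinner (K u) v + \<i> * cinner (K v) u) = 0"
    by (simp add: bco_scaleC[OF K] cinner_scaleC_left cinner_scaleC_right)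
  thus ?thesis by (simp add: ri_def)
qed

lemma bco_norm_sq:
  assumes K: "bounded_clinear_op K" and P: "positive_op K"
  shows "(norm (K x))^2 \<le> onorm K * ri (K x) x"
proof -
  have BL: "bounded_linear K" by (rule bco_bounded_linear[OF K])
  have pos: "ri (K z) z \<ge> 0" for z using P by (simp add: positive_op_def ri_def)
  have cs: "(ri (K x) y)^2 \<le> ri (K x) x * ri (K y) y" for y
  proof (rule quad_disc)
    fix t
    have "0 \<le> ri (K (x + t *\<^sub>R y)) (x + t *\<^sub>R y)" by (rule pos)
    also have "\<dots> = ri (K x + t *\<^sub>R K y) (x + t *\<^sub>R y)" by (simp add: bco_add[OF K] bco_scaleR[OF K])
    also have "\<dots> = ri (K x) x + t * (2 * ri (K x) y) + t^2 * ri (K y) y"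
      by (simp add: ri_expand2 bco_selfadj[OF K P, of y x])
    finally show "0 \<le> ri (K x) x + t * (2 * ri (K x) y) + t^2 * ri (K y) y" .
  qed
  have a: "ri (K x) (K x) = (norm (K x))^2" by (rule ri_self)
  have "ri (K (K x)) (K x) \<le> norm (K (K x)) * norm (K x)" using ri_cs by (meson abs_le_D1)
  also have "\<dots> \<le> onorm K * norm (K x) * norm (K x)" by (intro mult_right_mono onorm[OF BL]) auto
  finally have b: "ri (K (K x)) (K x) \<le> onorm K * (norm (K x))^2" by (simp add: power2_eq_square mult.assoc)
  have "((norm (K x))^2)^2 \<le> ri (K x) x * ri (K (K x)) (K x)" using cs[of "K x"] a by simp
  also have "\<dots> \<le> ri (K x) x * (onorm K * (norm (K x))^2)" by (intro mult_left_mono b pos)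
  finally have c: "((norm (K x))^2)^2 \<le> (onorm K * ri (K x) x) * (norm (K x))^2" by (simp add: algebra_simps)
  show ?thesis
  proof (cases "norm (K x) = 0")
    case True thus ?thesis using pos[of x] onorm_pos_le[OF BL] by simp
  next
    case False
    hence "(norm (K x))^2 > 0" by simp
    moreover have "(norm (K x))^2 * (norm (K x))^2 \<le> (onorm K * ri (K x) x) * (norm (K x))^2"
      using c by (simp only: power2_eq_square[of "(norm (K x))^2"])
    ultimately show ?thesis using mult_right_le_imp_le by blast
  qed
qed

theorem lemma3p11:
  fixes K :: "'a::chilbert \<Rightarrow> 'a" and \<eta> :: real
  assumes "bounded_clinear_op K"
    and "positive_op K"
    and "compact_op K"
    and "\<eta> > 0"
    and "\<eta> > onorm K / 2"
  shows "AN_star (\<lambda>x. \<eta> *\<^sub>R x - K x)"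
proof -
  note KB = assms(1) and KP = assms(2) and KC = assms(3) and eta0 = assms(4) and etaK = assms(5)
  have BLK: "bounded_linear K" by (rule bco_bounded_linear[OF KB])
  define W where "W x = \<eta> *\<^sub>R x - K x" for x
  have Wfun: "(\<lambda>x. \<eta> *\<^sub>R x - K x) = W" by (simp add: W_def fun_eq_iff)
  have BLW: "bounded_linear W" unfolding W_def[abs_def]
    by (intro bounded_linear_sub bounded_linear_scaleR_right BLK)
  have Kdiff: "K (a - b) = K a - K b" for a b using BLK by (rule linear_simps)
  have W_lin: "W (u + t *\<^sub>R v) = W u + t *\<^sub>R W v" for u v t
    by (simp add: W_def bco_add[OF KB] bco_scaleR[OF KB] algebra_simps)
  have W_diff: "W (a - b) = W a - W b" for a b
    by (simp add: W_def Kdiff algebra_simps)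
  have pos: "ri (K z) z \<ge> 0" for z using KP by (simp add: positive_op_def ri_def)
  have normW_sq: "(norm (W u))^2 = \<eta>^2 * (norm u)^2 - 2 * \<eta> * ri (K u) u + (norm (K u))^2" for u
  proof -
    have e: "W u = \<eta> *\<^sub>R u + (-1) *\<^sub>R K u" by (simp add: W_def)
    have "(norm (W u))^2 = ri (W u) (W u)" by (simp add: ri_self)
    also have "\<dots> = ri (\<eta> *\<^sub>R u + (-1) *\<^sub>R K u) (\<eta> *\<^sub>R u + (-1) *\<^sub>R K u)" by (simp only: e)
    also have "\<dots> = \<eta>^2 * (norm u)^2 - 2 * \<eta> * ri (K u) u + (norm (K u))^2"
      by (subst ri_expand2) (simp add: ri_scaleR_left ri_scaleR_right ri_self ri_commute[of u "K u"] power2_eq_square algebra_simps)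
    finally show ?thesis .
  qed
  have W_le: "norm (W u) \<le> \<eta>" if "norm u = 1" for u
  proof -
    have "(norm (K u))^2 \<le> onorm K * ri (K u) u" by (rule bco_norm_sq[OF KB KP])
    also have "\<dots> \<le> 2 * \<eta> * ri (K u) u" using etaK pos[of u] by (intro mult_right_mono) auto
    finally have a: "(norm (K u))^2 \<le> 2 * \<eta> * ri (K u) u" .
    have "(norm (W u))^2 = \<eta>^2 * 1 - 2 * \<eta> * ri (K u) u + (norm (K u))^2"
      using normW_sq[of u] that by (simp only: power_one)
    with a have "(norm (W u))^2 \<le> \<eta>^2" by linarith
    thus ?thesis using power2_le_imp_le[of "norm (W u)" \<eta>] eta0 by linarith
  qed
  show ?thesis unfolding Wfun AN_star_def
  proof (intro allI impI)
    fix M :: "'a set"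
    assume "closed_csubspace M \<and> M \<noteq> {0}"
    hence cs: "closed_csubspace M" and Mne: "M \<noteq> {0}" by auto
    have M0: "0 \<in> M" and Madd: "\<And>x y. x \<in> M \<Longrightarrow> y \<in> M \<Longrightarrow> x + y \<in> M"
      and MC: "\<And>c x. x \<in> M \<Longrightarrow> scaleC c x \<in> M" and Mcl: "closed M"
      using cs unfolding closed_csubspace_def by auto
    have MR: "r *\<^sub>R x \<in> M" if "x \<in> M" for r x using MC[OF that] by (simp add: scaleR_scaleC)
    have Mlin: "u + t *\<^sub>R v \<in> M" if "u \<in> M" "v \<in> M" for u v t using Madd MR that by blast
    have Mdiff: "u - v \<in> M" if "u \<in> M" "v \<in> M" for u v using Mlin[OF that, of "-1"] by simp
    define S where "S = {x \<in> M. norm x = 1}"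
    obtain z where zM: "z \<in> M" and z0: "z \<noteq> 0" using Mne M0 by blast
    define z' where "z' = (1 / norm z) *\<^sub>R z"
    have z'S: "z' \<in> S" using zM z0 MR by (simp add: S_def z'_def)
    define V where "V = (\<lambda>x. norm (W x)) ` S"
    have Vne: "V \<noteq> {}" using z'S by (auto simp: V_def)
    have Vbdd: "bdd_below V" by (rule bdd_belowI[of _ 0]) (auto simp: V_def)
    define m where "m = restr_inf W M"
    have m_def': "m = Inf V" by (simp add: m_def restr_inf_def V_def S_def)
    have m_le: "m \<le> norm (W x)" if "x \<in> S" for x
      unfolding m_def' using that Vbdd by (auto simp: V_def intro: cInf_lower)
    have m0: "0 \<le> m" unfolding m_def' using Vne by (auto simp: V_def intro!: cInf_greatest)
    have m_eta: "m \<le> \<eta>" using m_le[OF z'S] W_le[of z'] z'S by (simp add: S_def)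
    show "N_star W M"
    proof (cases "m = \<eta>")
      case True
      thus ?thesis unfolding N_star_def using z'S m_le[OF z'S] W_le[of z'] m_def
        by (intro bexI[of _ z']) (auto simp: S_def)
    next
      case False
      with m_eta have mlt: "m < \<eta>" by simp
      define c where "c = \<eta>^2 - m^2"
      have cpos: "c > 0" unfolding c_def using mlt m0 by (simp add: power_strict_mono)
      have low: "m * norm u \<le> norm (W u)" if "u \<in> M" for u
      proof (cases "u = 0")
        case True
        have "K 0 = 0" using bco_scaleR[OF KB, of 0 0] by simp
        thus ?thesis using True by (simp add: W_def)
      next
        case False
        have uS: "(1 / norm u) *\<^sub>R u \<in> S" using that False MR by (simp add: S_def)
        have "W ((1 / norm u) *\<^sub>R u) = (1 / norm u) *\<^sub>R W u"
          by (simp add: W_def bco_scaleR[OF KB] scaleR_right_diff_distrib)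
        with m_le[OF uS] have "m \<le> norm (W u) / norm u" by simp
        thus ?thesis using False by (simp add: field_simps)
      qed
      define q where "q u v = ri (W u) (W v) - m^2 * ri u v" for u v
      have q_pos: "q u u \<ge> 0" if "u \<in> M" for u
      proof -
        have "(m * norm u)^2 \<le> (norm (W u))^2" using low[OF that] m0 by (intro power_mono) auto
        thus ?thesis by (simp add: q_def ri_self power_mult_distrib)
      qed
      have q_cs: "(q u v)^2 \<le> q u u * q v v" if "u \<in> M" "v \<in> M" for u v
      proof (rule quad_disc)
        fix t
        have "0 \<le> q (u + t *\<^sub>R v) (u + t *\<^sub>R v)" by (rule q_pos[OF Mlin[OF that]])
        also have "\<dots> = q u u + t * (2 * q u v) + t^2 * q v v"
          by (simp add: q_def W_lin ri_expand2 ri_commute[of "W v" "W u"] ri_commute[of v u] algebra_simps)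
        finally show "0 \<le> q u u + t * (2 * q u v) + t^2 * q v v" .
      qed
      have q_diff: "q (a - b) d = q a d - q b d" for a b d
        by (simp add: q_def W_diff ri_diff_left algebra_simps)
      have q_self: "q u u = (norm (W u))^2 - m^2 * (norm u)^2" for u by (simp add: q_def ri_self)
      have key: "c * (norm (a - b))^2 \<le> 2 * (q a a + q b b) + 4 * \<eta> * norm (K a - K b)"
        if "a \<in> S" "b \<in> S" for a b
      proof -
        define d where "d = a - b"
        have aM: "a \<in> M" and bM: "b \<in> M" using that by (auto simp: S_def)
        have dM: "d \<in> M" unfolding d_def by (rule Mdiff[OF aM bM])
        have qdd: "q d d = q a d - q b d" unfolding d_def by (rule q_diff)
        have h1: "(q a d)^2 \<le> q a a * q d d" by (rule q_cs[OF aM dM])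
        have h2: "(q b d)^2 \<le> q b b * q d d" by (rule q_cs[OF bM dM])
        have "(q d d)^2 \<le> 2 * (q a d)^2 + 2 * (q b d)^2"
          unfolding qdd by (smt (verit) power2_diff sum_squares_ge_zero zero_le_power2 power2_sum)
        also have "\<dots> \<le> (2 * (q a a + q b b)) * q d d" using h1 h2 by (simp add: algebra_simps)
        finally have h3: "(q d d)^2 \<le> (2 * (q a a + q b b)) * q d d" .
        have qd: "q d d \<le> 2 * (q a a + q b b)"
        proof (cases "q d d = 0")
          case True thus ?thesis using q_pos[OF aM] q_pos[OF bM] by simp
        next
          case False
          hence "q d d > 0" using q_pos[OF dM] by simp
          moreover have "q d d * q d d \<le> (2 * (q a a + q b b)) * q d d" using h3 by (simp add: power2_eq_square)
          ultimately show ?thesis using mult_right_le_imp_le by blast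
        qed
        have nd: "norm d \<le> 2" using that norm_triangle_ineq4[of a b] by (simp add: S_def d_def)
        have "\<bar>ri (K d) d\<bar> \<le> norm (K d) * norm d" by (rule ri_cs)
        also have "\<dots> \<le> norm (K d) * 2" by (intro mult_left_mono nd) auto
        finally have rK: "ri (K d) d \<le> 2 * norm (K d)" by simp
        have "c * (norm d)^2 = q d d + 2 * \<eta> * ri (K d) d - (norm (K d))^2"
          by (simp add: q_self normW_sq c_def algebra_simps)
        also have "\<dots> \<le> 2 * (q a a + q b b) + 2 * \<eta> * (2 * norm (K d))"
          using qd rK eta0 by (smt (verit) mult_left_mono zero_le_power2)
        finally show ?thesis by (simp add: d_def Kdiff)
      qed
      have "\<forall>n. \<exists>x\<in>S. norm (W x) < m + 1 / (real n + 1)"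
      proof
        fix n
        have "Inf V < m + 1 / (real n + 1)" using m_def' by simp
        from cInf_lessD[OF Vne this] show "\<exists>x\<in>S. norm (W x) < m + 1 / (real n + 1)" by (auto simp: V_def)
      qed
      then obtain xs where xsS: "\<And>n. xs n \<in> S" and xsW: "\<And>n. norm (W (xs n)) < m + 1 / (real n + 1)"
        by metis
      have e_bound: "q (xs j) (xs j) \<le> (2 * m + 1) / (real j + 1)" for j
      proof -
        define h where "h = 1 / (real j + 1)"
        have h0: "0 < h" "h \<le> 1" by (auto simp: h_def)
        define w where "w = norm (W (xs j))"
        have w1: "m \<le> w" "w < m + h" using m_le[OF xsS[of j]] xsW[of j] by (auto simp: w_def h_def)
        have "q (xs j) (xs j) = w^2 - m^2" using xsS[of j] by (simp add: q_self w_def S_def)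
        also have "\<dots> = (w - m) * (w + m)" by (simp add: power2_eq_square algebra_simps)
        also have "\<dots> \<le> h * (2 * m + 1)" using w1 h0 m0 by (intro mult_mono) auto
        finally show ?thesis by (simp add: h_def)
      qed
      have Kin: "K (xs n) \<in> closure (K ` {x. norm x \<le> 1})" for n
        using xsS[of n] by (intro closure_subset[THEN subsetD]) (auto simp: S_def)
      have sc: "seq_compact (closure (K ` {x. norm x \<le> 1}))"
        using KC unfolding compact_op_def by (rule compact_imp_seq_compact)
      obtain l r where rm: "strict_mono (r :: nat \<Rightarrow> nat)" and lim: "((\<lambda>n. K (xs n)) \<circ> r) \<longlonglongrightarrow> l"
        using seq_compactE[OF sc, of "\<lambda>n. K (xs n)"] Kin by blast
      define y where "y n = xs (r n)" for n
      have yS: "y n \<in> S" for n by (simp add: y_def xsS)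
      have CK: "Cauchy (\<lambda>n. K (y n))" using LIMSEQ_imp_Cauchy[OF lim] by (simp add: y_def o_def)
      have Cy: "Cauchy y"
        unfolding Cauchy_def
      proof (intro allI impI)
        fix \<epsilon> :: real assume ep: "\<epsilon> > 0"
        define \<delta> where "\<delta> = c * \<epsilon>^2 / (5 + 4 * \<eta>)"
        have dpos: "\<delta> > 0" unfolding \<delta>_def using cpos ep eta0 by simp
        have dlt: "(4 + 4 * \<eta>) * \<delta> < c * \<epsilon>^2" unfolding \<delta>_def using cpos ep eta0
          by (simp add: field_simps)
        obtain N2 where N2: "\<And>n k. n \<ge> N2 \<Longrightarrow> k \<ge> N2 \<Longrightarrow> dist (K (y n)) (K (y k)) < \<delta>"
          using CK dpos unfolding Cauchy_def by meson
        obtain N1 :: nat where N1: "(2 * m + 1) / \<delta> < real N1" using reals_Archimedean2 by blast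
        have eb: "q (y n) (y n) < \<delta>" if "n \<ge> N1" for n
        proof -
          have "real N1 \<le> real (r n)" using seq_suble[OF rm, of n] that by simp
          hence "(2 * m + 1) / \<delta> < real (r n) + 1" using N1 by simp
          hence "(2 * m + 1) < \<delta> * (real (r n) + 1)" using dpos by (simp add: field_simps)
          hence "(2 * m + 1) / (real (r n) + 1) < \<delta>" by (simp add: field_simps)
          thus ?thesis using e_bound[of "r n"] by (simp add: y_def)
        qed
        show "\<exists>N. \<forall>n\<ge>N. \<forall>k\<ge>N. dist (y n) (y k) < \<epsilon>"
        proof (intro exI[of _ "max N1 N2"] allI impI)
          fix n k assume nN: "max N1 N2 \<le> n" and kN: "max N1 N2 \<le> k"
          have "c * (norm (y n - y k))^2 \<le> 2 * (q (y n) (y n) + q (y k) (y k)) + 4 * \<eta> * norm (K (y n) - K (y k))"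
            by (rule key[OF yS yS])
          also have "\<dots> \<le> 2 * (\<delta> + \<delta>) + 4 * \<eta> * \<delta>"
            using eb[of n] eb[of k] N2[of n k] nN kN eta0 by (intro add_mono mult_left_mono) (auto simp: dist_norm less_imp_le)
          also have "\<dots> < c * \<epsilon>^2" using dlt by (simp add: algebra_simps)
          finally have "(norm (y n - y k))^2 < \<epsilon>^2" using cpos by simp
          hence "norm (y n - y k) < \<epsilon>" using ep by (simp add: power_less_imp_less_base)
          thus "dist (y n) (y k) < \<epsilon>" by (simp add: dist_norm)
        qed
      qed
      hence "convergent y" by (simp only: Cauchy_convergent_iff)
      then obtain x0 where yx: "y \<longlonglongrightarrow> x0" unfolding convergent_def by blast
      have x0M: "x0 \<in> M" by (rule closed_sequentially[OF Mcl _ yx]) (use yS in \<open>auto simp: S_def\<close>)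
      have "(\<lambda>n. norm (y n)) \<longlonglongrightarrow> norm x0" by (rule tendsto_norm[OF yx])
      moreover have "(\<lambda>n. norm (y n)) = (\<lambda>n. 1)" using yS by (simp add: S_def fun_eq_iff)
      ultimately have "(\<lambda>n. 1::real) \<longlonglongrightarrow> norm x0" by simp
      hence nx0: "norm x0 = 1" using LIMSEQ_unique[OF tendsto_const] by metis
      have l1: "(\<lambda>n. norm (W (y n))) \<longlonglongrightarrow> norm (W x0)"
        by (intro tendsto_norm bounded_linear.tendsto[OF BLW] yx)
      have l2: "(\<lambda>n. norm (W (y n))) \<longlonglongrightarrow> m"
      proof (rule tendsto_sandwich[OF _ _ tendsto_const LIMSEQ_inverse_real_of_nat_add])
        show "\<forall>\<^sub>F n in sequentially. m \<le> norm (W (y n))" using m_le[OF yS] by simp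
        show "\<forall>\<^sub>F n in sequentially. norm (W (y n)) \<le> m + inverse (real (Suc n))"
        proof (intro always_eventually allI)
          fix n
          have "real n \<le> real (r n)" using seq_suble[OF rm, of n] by simp
          hence "1 / (real (r n) + 1) \<le> inverse (real (Suc n))" by (simp add: field_simps)
          thus "norm (W (y n)) \<le> m + inverse (real (Suc n))" using xsW[of "r n"] by (simp add: y_def)
        qed
      qed
      have "norm (W x0) = m" using LIMSEQ_unique[OF l1 l2] .
      thus ?thesis unfolding N_star_def using x0M nx0 m_def by blast
    qed
  qed
qed

end
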